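(* Let $n_1,m_1,n_2,m_2\in\mathbb{N}$, $c\in\mathbb{R}^{n_1}$, $A\in\mathbb{R}^{m_1\times n_1}$, $b\in\mathbb{R}^{m_1}$. Let $\boldsymbol{\xi}$ be a random vector taking values in a finite set $\mathcal{S}$ of scenarios with probabilities $\mathbb{P}(\xi)$, and for each $\xi\in\mathcal{S}$ let $q(\xi)\in\mathbb{R}^{n_2}$, $T(\xi)\in\mathbb{R}^{m_2\times n_1}$, $W(\xi)\in\mathbb{R}^{m_2\times n_2}$, $h(\xi)\in\mathbb{R}^{m_2}$. For $x\in\mathbb{R}^{n_1}$ and $\xi\in\mathcal{S}$ let $$Q(x,\xi)=\max\{\langle q(\xi),y\rangle:\ T(\xi)x+W(\xi)y\le h(\xi),\ y\ge 0,\ y\in\mathbb{R}^{n_2}\},$$ and let $$z^*=\max\{\langle c,x\rangle+\mathbb{E}_{\boldsymbol{\xi}}[Q(x,\boldsymbol{\xi})]:\ Ax\le b,\ x\ge 0\}$$ be the optimal objective value of the two-stage stochastic program. Let $R=\max\{\|x\|_2: Ax\le b,\ x\ge 0\}$, let $\tilde x$ be an optimal solution of $\max\{\langle c,x\rangle: Ax\le b,\ x\ge 0\}$, and for $\tau\ge 0$ let $\tilde x_\tau$ denote the solution of the convex problem $$\max\{\langle c,x_\tau\rangle:\ Ax_\tau\le b,\ \|x_\tau\|_2\le\tau,\ x_\tau\ge 0\}. \qquad (\ast)$$ Let $\varepsilon>0$ and assume all of the following: (a) the set $\{x: Ax\le b,\ x\ge 0\}$ is nonempty and bounded, and for each $\tau\ge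 0$ problem $(\ast)$ is feasible and has a unique solution; (b) for every $\xi\in\mathcal{S}$ and every $x\in\mathbb{R}^{n_1}$ with $\|x\|_2\le R$, the linear program defining $Q(x,\xi)$ is feasible and bounded; (c) for every $x\in\mathbb{R}^{n_1}$ with $\|x\|_2\le R$, $\big|\mathbb{E}_{\boldsymbol{\xi}}Q(x,\boldsymbol{\xi})-\mathbb{E}_{\boldsymbol{\xi}}Q((\|x\|_2,0,\dots,0)^\top,\boldsymbol{\xi})\big|\le\varepsilon$; (d) whenever $\|\tilde x\|_2\le\tau_1\le\tau_2\le R$, $\mathbb{E}_{\boldsymbol{\xi}}[Q((\tau_1,0,\dots,0)^\top,\boldsymbol{\xi})]\ge\mathbb{E}_{\boldsymbol{\xi}}[Q((\tau_2,0,\dots,0)^\top,\boldsymbol{\xi})]-\varepsilon$. Define $$\hat z^*=\max\Big\{\langle c,\tilde x_\tau\rangle+\mathbb{E}_{\boldsymbol{\xi}}[Q((\|\tilde x_\tau\|_2,0,\dots,0)^\top,\boldsymbol{\xi})]:\ 0\le\tau\le R\Big\}.$$ Then $|z^*-\hat z^*|\le 2\varepsilon$.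
   Context: $\mathbb{E}_{\boldsymbol{\xi}}[f(\boldsymbol{\xi})]=\sum_{\xi\in\mathcal{S}}\mathbb{P}(\xi)f(\xi)$. Vector inequalities are componentwise. $(t,0,\dots,0)^\top\in\mathbb{R}^{n_1}$ denotes $t$ times the first standard basis vector. Condition (c) is called approximate rotational invariance and (d) approximate monotonicity in the paper. *)

theory Defs
  imports "HOL-Analysis.Analysis"
begin

definition expect :: "'s set \<Rightarrow> ('s \<Rightarrow> real) \<Rightarrow> ('s \<Rightarrow> real) \<Rightarrow> real" where
  "expect S P f = (\<Sum>\<xi>\<in>S. P \<xi> * f \<xi>)"

text \<open>Second-stage value Q(x,xi) = max { q.y : T x + W y <= h, y >= 0 } (the maximum,
  when attained, equals the supremum).\<close>
definition Qval :: "real^'n2 \<Rightarrow> real^'n1^'m2 \<Rightarrow> real^'n2^'m2 \<Rightarrow> real^'m2 \<Rightarrow> real^'n1 \<Rightarrow> real" where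
  "Qval q T W h x = Sup {q \<bullet> y | y. T *v x + W *v y \<le> h \<and> 0 \<le> y}"

definition EQv :: "'s set \<Rightarrow> ('s \<Rightarrow> real) \<Rightarrow> ('s \<Rightarrow> real^'n2) \<Rightarrow> ('s \<Rightarrow> real^'n1^'m2)
   \<Rightarrow> ('s \<Rightarrow> real^'n2^'m2) \<Rightarrow> ('s \<Rightarrow> real^'m2) \<Rightarrow> real^'n1 \<Rightarrow> real" where
  "EQv S P q T W h x = expect S P (\<lambda>\<xi>. Qval (q \<xi>) (T \<xi>) (W \<xi>) (h \<xi>) x)"

text \<open>The vector (t,0,...,0): t times the first standard basis vector (first index w.r.t.
  the well-order of the index type).\<close>
definition e1 :: "real \<Rightarrow> real^'n::{finite,wellorder}" where
  "e1 t = axis (LEAST i::'n. True) t"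

definition feas :: "real^'n^'m \<Rightarrow> real^'m \<Rightarrow> (real^'n) set" where
  "feas A b = {x. A *v x \<le> b \<and> 0 \<le> x}"

definition is_opt_tau :: "real^'n \<Rightarrow> real^'n^'m \<Rightarrow> real^'m \<Rightarrow> real \<Rightarrow> real^'n \<Rightarrow> bool" where
  "is_opt_tau c A b \<tau> x \<longleftrightarrow> x \<in> feas A b \<and> norm x \<le> \<tau> \<and>
     (\<forall>x'. x' \<in> feas A b \<and> norm x' \<le> \<tau> \<longrightarrow> c \<bullet> x' \<le> c \<bullet> x)"

definition xtau :: "real^'n \<Rightarrow> real^'n^'m \<Rightarrow> real^'m \<Rightarrow> real \<Rightarrow> real^'n" where
  "xtau c A b \<tau> = (THE x. is_opt_tau c A b \<tau> x)"

end

theory Submission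
  imports Defs
begin

lemma vec_comb_le:
  fixes u v b :: "real^'m"
  assumes "u \<le> b" "v \<le> b" "0 \<le> l" "l \<le> 1"
  shows "l *\<^sub>R u + (1 - l) *\<^sub>R v \<le> b"
proof -
  have "\<And>i. l * u$i + (1-l) * v$i \<le> b$i"
  proof -
    fix i
    have "l * u$i \<le> l * b$i" using assms by (simp add: less_eq_vec_def mult_left_mono)
    moreover have "(1-l) * v$i \<le> (1-l) * b$i" using assms by (simp add: less_eq_vec_def mult_left_mono)
    ultimately show "l * u$i + (1-l) * v$i \<le> b$i" by (simp add: algebra_simps)
  qed
  then show ?thesis by (simp add: less_eq_vec_def)
qed

lemma vec_comb_ge0:
  fixes u v :: "real^'m"
  assumes "0 \<le> u" "0 \<le> v" "0 \<le> l" "l \<le> 1"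
  shows "0 \<le> l *\<^sub>R u + (1 - l) *\<^sub>R v"
  using assms by (simp add: less_eq_vec_def)

lemma feas_comb:
  assumes "u \<in> feas A b" "v \<in> feas A b" "0 \<le> l" "l \<le> 1"
  shows "l *\<^sub>R u + (1 - l) *\<^sub>R v \<in> feas A b"
  using assms vec_comb_le[of "A *v u" b "A *v v" l] vec_comb_ge0[of u v l]
  by (simp add: feas_def algebra_simps)

lemma Qval_concave:
  fixes l :: real
  assumes l: "0 \<le> l" "l \<le> 1"
    and f1: "\<exists>y. T *v x1 + W *v y \<le> h \<and> 0 \<le> y"
    and f2: "\<exists>y. T *v x2 + W *v y \<le> h \<and> 0 \<le> y"
    and bd: "bdd_above {q \<bullet> y | y. T *v (l *\<^sub>R x1 + (1-l) *\<^sub>R x2) + W *v y \<le> h \<and> 0 \<le> y}"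
  shows "l * Qval q T W h x1 + (1-l) * Qval q T W h x2 \<le> Qval q T W h (l *\<^sub>R x1 + (1-l) *\<^sub>R x2)"
proof -
  let ?x = "l *\<^sub>R x1 + (1-l) *\<^sub>R x2"
  let ?Q = "Qval q T W h ?x"
  have key: "l * (q \<bullet> y1) + (1-l) * (q \<bullet> y2) \<le> ?Q"
    if y1: "T *v x1 + W *v y1 \<le> h" "0 \<le> y1" and y2: "T *v x2 + W *v y2 \<le> h" "0 \<le> y2" for y1 y2
  proof -
    have "T *v ?x + W *v (l *\<^sub>R y1 + (1-l) *\<^sub>R y2) = l *\<^sub>R (T *v x1 + W *v y1) + (1-l) *\<^sub>R (T *v x2 + W *v y2)"
      by (simp add: algebra_simps)
    also have "\<dots> \<le> h" using vec_comb_le[OF y1(1) y2(1) l] .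
    finally have "T *v ?x + W *v (l *\<^sub>R y1 + (1-l) *\<^sub>R y2) \<le> h" .
    moreover have "0 \<le> l *\<^sub>R y1 + (1-l) *\<^sub>R y2" using vec_comb_ge0[OF y1(2) y2(2) l] .
    ultimately have "q \<bullet> (l *\<^sub>R y1 + (1-l) *\<^sub>R y2) \<le> ?Q"
      unfolding Qval_def by (intro cSup_upper[OF _ bd]) blast
    then show ?thesis by (simp add: inner_add_right)
  qed
  show ?thesis
  proof (cases "l = 0")
    case True then show ?thesis by simp
  next
    case l0: False
    show ?thesis
    proof (cases "l = 1")
      case True then show ?thesis by simp
    next
      case l1: False
      have lp: "0 < l" "0 < 1 - l" using l l0 l1 by auto
      have s1: "Qval q T W h x1 \<le> (?Q - (1-l) * (q \<bullet> y2)) / l"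
        if y2: "T *v x2 + W *v y2 \<le> h" "0 \<le> y2" for y2
        unfolding Qval_def[of q T W h x1]
      proof (rule cSup_least)
        show "{q \<bullet> y |y. T *v x1 + W *v y \<le> h \<and> 0 \<le> y} \<noteq> {}" using f1 by blast
      next
        fix z assume "z \<in> {q \<bullet> y |y. T *v x1 + W *v y \<le> h \<and> 0 \<le> y}"
        then obtain y1 where "z = q \<bullet> y1" "T *v x1 + W *v y1 \<le> h" "0 \<le> y1" by blast
        with key[OF _ _ y2] lp show "z \<le> (?Q - (1-l) * (q \<bullet> y2)) / l"
          by (simp add: field_simps)
      qed
      have "Qval q T W h x2 \<le> (?Q - l * Qval q T W h x1) / (1-l)"
        unfolding Qval_def[of q T W h x2]
      proof (rule cSup_least)
        show "{q \<bullet> y |y. T *v x2 + W *v y \<le> h \<and> 0 \<le> y} \<noteq> {}" using f2 by blast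
      next
        fix z assume "z \<in> {q \<bullet> y |y. T *v x2 + W *v y \<le> h \<and> 0 \<le> y}"
        then obtain y2 where "z = q \<bullet> y2" "T *v x2 + W *v y2 \<le> h" "0 \<le> y2" by blast
        with s1[of y2] lp show "z \<le> (?Q - l * Qval q T W h x1) / (1-l)"
          by (simp add: field_simps)
      qed
      with lp show ?thesis by (simp add: field_simps)
    qed
  qed
qed

lemma e1_comb: "l *\<^sub>R e1 a + (1-l) *\<^sub>R e1 b = (e1 (l*a + (1-l)*b) :: real^'n::{finite,wellorder})"
  by (simp add: e1_def axis_def vec_eq_iff)

lemma norm_e1: "norm (e1 t :: real^'n::{finite,wellorder}) = \<bar>t\<bar>"
  unfolding e1_def norm_eq_sqrt_inner inner_axis_axis by simp


lemma EQv_concave: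
  fixes l :: real
  assumes P: "\<forall>\<xi>\<in>S. 0 \<le> P \<xi>" and l: "0 \<le> l" "l \<le> 1"
    and f1: "\<forall>\<xi>\<in>S. \<exists>y. T \<xi> *v x1 + W \<xi> *v y \<le> h \<xi> \<and> 0 \<le> y"
    and f2: "\<forall>\<xi>\<in>S. \<exists>y. T \<xi> *v x2 + W \<xi> *v y \<le> h \<xi> \<and> 0 \<le> y"
    and bd: "\<forall>\<xi>\<in>S. bdd_above {q \<xi> \<bullet> y | y. T \<xi> *v (l *\<^sub>R x1 + (1-l) *\<^sub>R x2) + W \<xi> *v y \<le> h \<xi> \<and> 0 \<le> y}"
  shows "l * EQv S P q T W h x1 + (1-l) * EQv S P q T W h x2 \<le> EQv S P q T W h (l *\<^sub>R x1 + (1-l) *\<^sub>R x2)"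
proof -
  have "l * EQv S P q T W h x1 + (1-l) * EQv S P q T W h x2 =
    (\<Sum>\<xi>\<in>S. P \<xi> * (l * Qval (q \<xi>) (T \<xi>) (W \<xi>) (h \<xi>) x1 + (1-l) * Qval (q \<xi>) (T \<xi>) (W \<xi>) (h \<xi>) x2))"
    by (simp add: EQv_def expect_def sum_distrib_left sum.distrib distrib_left mult.left_commute)
  also have "\<dots> \<le> (\<Sum>\<xi>\<in>S. P \<xi> * Qval (q \<xi>) (T \<xi>) (W \<xi>) (h \<xi>) (l *\<^sub>R x1 + (1-l) *\<^sub>R x2))"
    apply (rule sum_mono)
    apply (rule mult_left_mono)
     apply (rule Qval_concave[OF l])
    using f1 f2 bd P by auto
  also have "\<dots> = EQv S P q T W h (l *\<^sub>R x1 + (1-l) *\<^sub>R x2)"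
    by (simp add: EQv_def expect_def)
  finally show ?thesis .
qed

theorem proposition1:
  fixes c :: "real^'n1::{finite,wellorder}"
    and A :: "real^'n1::{finite,wellorder}^'m1" and b :: "real^'m1"
    and S :: "'s set" and P :: "'s \<Rightarrow> real"
    and q :: "'s \<Rightarrow> real^'n2" and T :: "'s \<Rightarrow> real^'n1::{finite,wellorder}^'m2"
    and W :: "'s \<Rightarrow> real^'n2^'m2" and h :: "'s \<Rightarrow> real^'m2"
    and xt :: "real^'n1::{finite,wellorder}" and \<epsilon> :: real
  defines "R \<equiv> Sup (norm ` feas A b)"
    and "zstar \<equiv> Sup {c \<bullet> x + EQv S P q T W h x | x. x \<in> feas A b}"
    and "zhat \<equiv> Sup {c \<bullet> xtau c A b \<tau> + EQv S P q T W h (e1 (norm (xtau c A b \<tau>))) | \<tau>. 0 \<le> \<tau> \<and> \<tau> \<le> Sup (norm ` feas A b)}"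
  assumes S_fin: "finite S" and P_nonneg: "\<forall>\<xi>\<in>S. 0 \<le> P \<xi>" and P_sum: "(\<Sum>\<xi>\<in>S. P \<xi>) = 1"
    and xt_opt: "xt \<in> feas A b" "\<forall>x\<in>feas A b. c \<bullet> x \<le> c \<bullet> xt"
    and eps: "\<epsilon> > 0"
    and a_ne: "feas A b \<noteq> {}" and a_bd: "bounded (feas A b)"
    and a_uniq: "\<forall>\<tau>\<ge>0. \<exists>!x. is_opt_tau c A b \<tau> x"
    and b_feas: "\<forall>\<xi>\<in>S. \<forall>x::real^'n1::{finite,wellorder}. norm x \<le> R \<longrightarrow>
        (\<exists>y. T \<xi> *v x + W \<xi> *v y \<le> h \<xi> \<and> 0 \<le> y) \<and>
        bdd_above {q \<xi> \<bullet> y | y. T \<xi> *v x + W \<xi> *v y \<le> h \<xi> \<and> 0 \<le> y}"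
    and c_rot: "\<forall>x::real^'n1::{finite,wellorder}. norm x \<le> R \<longrightarrow> \<bar>EQv S P q T W h x - EQv S P q T W h (e1 (norm x))\<bar> \<le> \<epsilon>"
    and d_mono: "\<forall>\<tau>1 \<tau>2. norm xt \<le> \<tau>1 \<and> \<tau>1 \<le> \<tau>2 \<and> \<tau>2 \<le> R \<longrightarrow>
        EQv S P q T W h (e1 \<tau>1) \<ge> EQv S P q T W h (e1 \<tau>2) - \<epsilon>"
  shows "\<bar>zstar - zhat\<bar> \<le> 2 * \<epsilon>"
proof -
  let ?F = "feas A b"
  let ?E = "EQv S P q T W h"
  obtain B where B: "\<forall>x\<in>?F. norm x \<le> B" using a_bd unfolding bounded_iff by blast
  have bddN: "bdd_above (norm ` ?F)" using B by (auto intro: bdd_aboveI2)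
  have normR: "\<forall>x\<in>?F. norm x \<le> R" unfolding R_def using bddN by (auto intro: cSup_upper)
  have R0: "0 \<le> R" using a_ne normR norm_ge_zero by (meson all_not_in_conv order_trans)
  have RS: "Sup (norm ` ?F) = R" unfolding R_def ..
  have xopt: "is_opt_tau c A b \<tau> (xtau c A b \<tau>)" if "0 \<le> \<tau>" for \<tau>
  proof -
    have "\<exists>!x. is_opt_tau c A b \<tau> x" using a_uniq that by blast
    then show ?thesis unfolding xtau_def by (rule theI')
  qed
  have xt_is: "is_opt_tau c A b \<tau> xt" if "norm xt \<le> \<tau>" for \<tau>
    using xt_opt that by (auto simp: is_opt_tau_def)
  have xtau_big: "xtau c A b \<tau> = xt" if "norm xt \<le> \<tau>" for \<tau>
  proof -
    have "0 \<le> \<tau>" using that norm_ge_zero order_trans by blast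
    then have "\<exists>!x. is_opt_tau c A b \<tau> x" using a_uniq by blast
    then show ?thesis unfolding xtau_def using xt_is[OF that] by (rule the1_equality)
  qed
  have xtau_small: "norm (xtau c A b \<tau>) = \<tau>" if t0: "0 \<le> \<tau>" and tl: "\<tau> < norm xt" for \<tau>
  proof (rule ccontr)
    assume ne: "norm (xtau c A b \<tau>) \<noteq> \<tau>"
    define u where "u = xtau c A b \<tau>"
    have uo: "is_opt_tau c A b \<tau> u" unfolding u_def using xopt[OF t0] .
    then have uF: "u \<in> ?F" and unl: "norm u \<le> \<tau>" and umax: "\<forall>x'. x' \<in> ?F \<and> norm x' \<le> \<tau> \<longrightarrow> c \<bullet> x' \<le> c \<bullet> u"
      by (auto simp: is_opt_tau_def)
    have unlt: "norm u < \<tau>" using ne unl u_def by auto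
    have cu: "c \<bullet> u \<le> c \<bullet> xt" using xt_opt uF by auto
    have ceq: "c \<bullet> u = c \<bullet> xt"
    proof (rule ccontr)
      assume "c \<bullet> u \<noteq> c \<bullet> xt"
      with cu have lt: "c \<bullet> u < c \<bullet> xt" by simp
      define d where "d = norm (xt - u)"
      define t where "t = min 1 ((\<tau> - norm u) / (d + 1))"
      have d0: "0 \<le> d" unfolding d_def by simp
      have tpos: "0 < t" unfolding t_def using unlt d0 by auto
      have t1: "t \<le> 1" unfolding t_def by simp
      have td1: "t * (d + 1) \<le> \<tau> - norm u"
      proof -
        have "t \<le> (\<tau> - norm u) / (d + 1)" unfolding t_def by simp
        then show ?thesis using d0 by (simp add: field_simps)
      qed
      define y where "y = t *\<^sub>R xt + (1 - t) *\<^sub>R u"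
      have yF: "y \<in> ?F" unfolding y_def using feas_comb[OF xt_opt(1) uF] tpos t1 by simp
      have yeq: "y = u + t *\<^sub>R (xt - u)" unfolding y_def by (simp add: algebra_simps)
      have "norm y \<le> norm u + t * d"
        unfolding yeq d_def using norm_triangle_ineq[of u "t *\<^sub>R (xt - u)"] tpos by simp
      also have "\<dots> \<le> \<tau>" using td1 tpos d0 by (simp add: algebra_simps)
      finally have "norm y \<le> \<tau>" .
      with umax yF have "c \<bullet> y \<le> c \<bullet> u" by blast
      moreover have "c \<bullet> y = c \<bullet> u + t * (c \<bullet> xt - c \<bullet> u)"
        unfolding yeq by (simp add: inner_add_right inner_diff_right)
      moreover have "0 < t * (c \<bullet> xt - c \<bullet> u)" using tpos lt by simp
      ultimately show False by linarith
    qed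
    have "is_opt_tau c A b (norm xt) u"
      using uF unlt tl ceq xt_opt by (auto simp: is_opt_tau_def)
    moreover have "is_opt_tau c A b (norm xt) xt" by (rule xt_is) simp
    moreover have "\<exists>!x. is_opt_tau c A b (norm xt) x" using a_uniq by simp
    ultimately have "u = xt" by blast
    then show False using unlt tl by simp
  qed
  define E0 where "E0 = ?E (e1 0)"
  define ER where "ER = ?E (e1 (- R))"
  have bfe: "\<forall>\<xi>\<in>S. \<exists>y. T \<xi> *v e1 s + W \<xi> *v y \<le> h \<xi> \<and> 0 \<le> y" if "\<bar>s\<bar> \<le> R" for s
  proof -
    have n: "norm (e1 s :: real^'n1::{finite,wellorder}) \<le> R" using that by (simp add: norm_e1)
    show ?thesis
      apply (intro ballI)
      subgoal for \<xi> using b_feas[rule_format, of \<xi> "e1 s"] n by simp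
      done
  qed
  have bbd: "\<forall>\<xi>\<in>S. bdd_above {q \<xi> \<bullet> y | y. T \<xi> *v e1 s + W \<xi> *v y \<le> h \<xi> \<and> 0 \<le> y}" if "\<bar>s\<bar> \<le> R" for s
  proof -
    have n: "norm (e1 s :: real^'n1::{finite,wellorder}) \<le> R" using that by (simp add: norm_e1)
    show ?thesis
      apply (intro ballI)
      subgoal for \<xi> using b_feas[rule_format, of \<xi> "e1 s"] n by simp
      done
  qed
  have Ebound: "?E (e1 t) \<le> 2 * (\<bar>E0\<bar> + \<bar>ER\<bar>)" if t0: "0 \<le> t" and tR: "t \<le> R" for t
  proof (cases "t = 0")
    case True then show ?thesis unfolding E0_def by simp
  next
    case False
    with t0 have tp: "0 < t" by simp
    with tR have Rp: "0 < R" by simp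
    define l where "l = R / (R + t)"
    have l0: "0 \<le> l" and l1: "l \<le> 1" unfolding l_def using tp Rp by (auto simp: field_simps)
    have lh: "1/2 \<le> l" unfolding l_def using tp Rp tR by (simp add: field_simps)
    have comb0: "l * t + (1 - l) * (- R) = 0" unfolding l_def using tp Rp by (simp add: field_simps)
    have ce: "l *\<^sub>R e1 t + (1 - l) *\<^sub>R e1 (- R) = (e1 0 :: real^'n1::{finite,wellorder})"
      using e1_comb[of l t "- R"] comb0 by simp
    have "l * ?E (e1 t) + (1 - l) * ?E (e1 (- R)) \<le> ?E (l *\<^sub>R e1 t + (1 - l) *\<^sub>R e1 (- R))"
      apply (rule EQv_concave[OF P_nonneg l0 l1])
        apply (rule bfe) using tR t0 apply simp
       apply (rule bfe) using R0 apply simp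
      unfolding ce apply (rule bbd) using R0 by simp
    then have main: "l * ?E (e1 t) + (1 - l) * ER \<le> E0" unfolding ce E0_def ER_def .
    have "(1 - l) * ER \<ge> - \<bar>ER\<bar>"
    proof -
      have "(1 - l) * ER \<ge> (1 - l) * (- \<bar>ER\<bar>)" using l1 by (intro mult_left_mono) auto
      moreover have "(1 - l) * (- \<bar>ER\<bar>) \<ge> - \<bar>ER\<bar>" using l0 by (simp add: algebra_simps)
      ultimately show ?thesis by linarith
    qed
    with main have m2: "l * ?E (e1 t) \<le> \<bar>E0\<bar> + \<bar>ER\<bar>" by linarith
    show ?thesis
    proof (cases "?E (e1 t) \<le> 0")
      case True then show ?thesis by simp
    next
      case False
      then have "?E (e1 t) \<le> 2 * l * ?E (e1 t)" using lh by (simp add: mult_right_mono[of 1 "2*l"] )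
      then have "?E (e1 t) \<le> 2 * (l * ?E (e1 t))" by (simp add: mult.assoc)
      then show ?thesis using order_trans[OF _ mult_left_mono[OF m2, of 2]] by simp
    qed
  qed
  define K where "K = norm c * R + 2 * (\<bar>E0\<bar> + \<bar>ER\<bar>) + \<epsilon>"
  have Erot: "?E x \<le> ?E (e1 (norm x)) + \<epsilon>" "?E (e1 (norm x)) \<le> ?E x + \<epsilon>" if "x \<in> ?F" for x
    using c_rot normR that by (auto simp: abs_le_iff)
  have Zb: "c \<bullet> x + ?E x \<le> K" if xF: "x \<in> ?F" for x
  proof -
    have "c \<bullet> x \<le> norm c * norm x" by (rule norm_cauchy_schwarz)
    also have "\<dots> \<le> norm c * R" using normR xF by (simp add: mult_left_mono)
    finally have 1: "c \<bullet> x \<le> norm c * R" .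
    have "?E (e1 (norm x)) \<le> 2 * (\<bar>E0\<bar> + \<bar>ER\<bar>)" using Ebound normR xF by simp
    with Erot[OF xF] 1 show ?thesis unfolding K_def by linarith
  qed
  let ?Z = "{c \<bullet> x + ?E x | x. x \<in> ?F}"
  let ?H = "{c \<bullet> xtau c A b \<tau> + ?E (e1 (norm (xtau c A b \<tau>))) | \<tau>. 0 \<le> \<tau> \<and> \<tau> \<le> Sup (norm ` ?F)}"
  have Zne: "?Z \<noteq> {}" using a_ne by blast
  have Zbdd: "bdd_above ?Z" using Zb by (auto intro!: bdd_aboveI[of _ K])
  have Zup: "c \<bullet> x + ?E x \<le> zstar" if "x \<in> ?F" for x
    unfolding zstar_def using that Zbdd by (auto intro!: cSup_upper)
  have Hle: "z \<le> zstar + \<epsilon>" if "z \<in> ?H" for z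
  proof -
    obtain \<tau> where z: "z = c \<bullet> xtau c A b \<tau> + ?E (e1 (norm (xtau c A b \<tau>)))" and t0: "0 \<le> \<tau>" and tR: "\<tau> \<le> R"
      using \<open>z \<in> ?H\<close> RS by auto
    have uF: "xtau c A b \<tau> \<in> ?F" using xopt[OF t0] by (simp add: is_opt_tau_def)
    show ?thesis using Erot(2)[OF uF] Zup[OF uF] z by linarith
  qed
  have Hne: "?H \<noteq> {}" using R0 RS by auto
  have Hbdd: "bdd_above ?H" using Hle by (auto intro!: bdd_aboveI[of _ "zstar + \<epsilon>"])
  have up1: "zhat \<le> zstar + \<epsilon>" unfolding zhat_def using Hne Hle by (intro cSup_least) auto
  have up2: "zstar \<le> zhat + 2 * \<epsilon>"
    unfolding zstar_def
  proof (rule cSup_least[OF Zne])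
    fix z assume "z \<in> ?Z"
    then obtain x where z: "z = c \<bullet> x + ?E x" and xF: "x \<in> ?F" by blast
    define \<tau> where "\<tau> = norm x"
    have t0: "0 \<le> \<tau>" and tR: "\<tau> \<le> R" unfolding \<tau>_def using normR xF by auto
    define u where "u = xtau c A b \<tau>"
    have uo: "is_opt_tau c A b \<tau> u" unfolding u_def using xopt[OF t0] .
    have cxu: "c \<bullet> x \<le> c \<bullet> u" using uo xF unfolding is_opt_tau_def \<tau>_def by auto
    have inH: "c \<bullet> u + ?E (e1 (norm u)) \<in> ?H" unfolding u_def using t0 tR RS by auto
    have leH: "c \<bullet> u + ?E (e1 (norm u)) \<le> zhat" unfolding zhat_def using inH Hbdd by (rule cSup_upper)
    have key: "?E x \<le> ?E (e1 (norm u)) + 2 * \<epsilon>"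
    proof (cases "norm xt \<le> \<tau>")
      case True
      then have "u = xt" unfolding u_def by (rule xtau_big)
      moreover have "?E (e1 (norm xt)) \<ge> ?E (e1 \<tau>) - \<epsilon>" using d_mono True tR by blast
      ultimately show ?thesis using Erot(1)[OF xF] unfolding \<tau>_def by simp
    next
      case False
      then have "norm u = \<tau>" unfolding u_def using xtau_small t0 by simp
      then show ?thesis using Erot(1)[OF xF] eps unfolding \<tau>_def by simp
    qed
    show "z \<le> zhat + 2 * \<epsilon>" using z cxu key leH by linarith
  qed
  show ?thesis using up1 up2 eps by (simp add: abs_le_iff)
qed

end
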